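(* Let $\mathbb{X}$ be a smooth reflexive real Banach space with the Kadets–Klee property and $\mathbb{Y}$ a smooth real Banach space. Let $T\in\mathbb{K}(\mathbb{X},\mathbb{Y})$ with $\|T\|=1$ be a smooth operator. Then $M_T=\{\pm x\}$ for some $x\in S_{\mathbb{X}}$. Moreover, let $H$ be the unique hyperspace of $\mathbb{X}$ such that $x\perp_B H$; if $(x,Tx)$ is a CPP with CPP constant $(r,\mu)$ and $0<\|T\|_H<\mu$, then $T$ is not an extreme contraction.
   Context: All Banach spaces are real and of dimension greater than $1$. $\mathbb{K}(\mathbb{X},\mathbb{Y})$ is the space of compact linear operators with operator norm. $T$ is a smooth operator if it is a smooth point of the unit sphere of $\mathbb{K}(\mathbb{X},\mathbb{Y})$, i.e., there is a unique norm one functional $f$ on $\mathbb{K}(\mathbb{X},\mathbb{Y})$ with $f(T)=\|T\|$. $\mathbb{X}$ has the Kadets–Klee property if $x_n\rightharpoonup x$ weakly and $\|x_n\|\to\|x\|$ imply $x_n\to x$ in norm. $M_T=\{x\in S_{\mathbb{X}}:\|Tx\|=\|T\|\}$. $x\perp_B y$ means $\|x+\lambda y\|\ge\|x\|$ for all real $\lambda$; $x\perp_B H$ means $x\perp_B h$ for all $h\in H$; $x^\perp=\{y:x\perp_By\}$. A hyperspace is a closed subspace of codimension one. $\|T\|_H=\sup\{\|Th\|:h\in H,\|h\|=1\}$. An extreme contraction is a norm one operator that is an extreme point of the closed unit ball of $\mathbb{L}(\mathbb{X},\mathbb{Y})$. $B(x,r)=\{u:\|u-x\|<r\}$. For $x\in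 S_{\mathbb{X}}$, $v\in S_{\mathbb{Y}}$, $(x,v)$ is a CPP with CPP constant $(r,\mu)$ ($r,\mu>0$) if for all $z\in x^\perp\cap S_{\mathbb{X}}$, all $w\in v^\perp\cap S_{\mathbb{Y}}$ and all $a,b\in\mathbb{R}$, $ax+bz\in B(x,r)\cap S_{\mathbb{X}}$ implies $\|av+b\mu w\|\le1$. *)

theory Defs
  imports "HOL-Analysis.Analysis"
begin

(* Real Banach spaces = types of class banach; dual space = 'a =>L real; L(X,Y) = 'a =>L 'b with operator norm. *)

definition dim_gt_one :: "'a::real_vector itself \<Rightarrow> bool" where
  "dim_gt_one _ \<longleftrightarrow> (\<exists>u v::'a. independent {u, v} \<and> u \<noteq> v)"

definition smooth_space :: "'a::real_normed_vector itself \<Rightarrow> bool" where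
  "smooth_space _ \<longleftrightarrow>
     (\<forall>x::'a. norm x = 1 \<longrightarrow> (\<exists>!f::'a \<Rightarrow>\<^sub>L real. norm f = 1 \<and> blinfun_apply f x = 1))"

definition reflexive_space :: "'a::real_normed_vector itself \<Rightarrow> bool" where
  "reflexive_space _ \<longleftrightarrow>
     (\<forall>\<phi>::('a \<Rightarrow>\<^sub>L real) \<Rightarrow>\<^sub>L real. \<exists>x::'a. \<forall>f. blinfun_apply \<phi> f = blinfun_apply f x)"

definition weakly_converges :: "(nat \<Rightarrow> 'a::real_normed_vector) \<Rightarrow> 'a \<Rightarrow> bool" where
  "weakly_converges xs x \<longleftrightarrow>
     (\<forall>f::'a \<Rightarrow>\<^sub>L real. (\<lambda>n. blinfun_apply f (xs n)) \<longlonglongrightarrow> blinfun_apply f x)"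

definition kadets_klee :: "'a::real_normed_vector itself \<Rightarrow> bool" where
  "kadets_klee _ \<longleftrightarrow>
     (\<forall>(xs::nat \<Rightarrow> 'a) x. weakly_converges xs x \<and> (\<lambda>n. norm (xs n)) \<longlonglongrightarrow> norm x
        \<longrightarrow> xs \<longlonglongrightarrow> x)"

definition compact_op :: "('a::real_normed_vector \<Rightarrow>\<^sub>L 'b::real_normed_vector) \<Rightarrow> bool" where
  "compact_op T \<longleftrightarrow> compact (closure (blinfun_apply T ` cball 0 1))"

text \<open>A norm-one (bounded linear) functional on the subspace K(X,Y) of compact
  operators, given as a function on L(X,Y) whose values outside K are irrelevant.\<close>
definition K_norm_one_functional ::
  "(('a::real_normed_vector \<Rightarrow>\<^sub>L 'b::real_normed_vector) \<Rightarrow> real) \<Rightarrow> bool" where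
  "K_norm_one_functional f \<longleftrightarrow>
     (\<forall>A B. compact_op A \<longrightarrow> compact_op B \<longrightarrow> f (A + B) = f A + f B) \<and>
     (\<forall>A c. compact_op A \<longrightarrow> f (c *\<^sub>R A) = c * f A) \<and>
     (\<exists>C. \<forall>A. compact_op A \<longrightarrow> \<bar>f A\<bar> \<le> C * norm A) \<and>
     Sup {\<bar>f A\<bar> | A. compact_op A \<and> norm A = 1} = 1"

definition smooth_operator :: "('a::real_normed_vector \<Rightarrow>\<^sub>L 'b::real_normed_vector) \<Rightarrow> bool" where
  "smooth_operator T \<longleftrightarrow> compact_op T \<and> norm T = 1 \<and>
     (\<exists>f. K_norm_one_functional f \<and> f T = norm T) \<and>
     (\<forall>f g. K_norm_one_functional f \<and> f T = norm T \<and> K_norm_one_functional g \<and> g T = norm T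
        \<longrightarrow> (\<forall>A. compact_op A \<longrightarrow> f A = g A))"

definition norm_attainment_set :: "('a::real_normed_vector \<Rightarrow>\<^sub>L 'b::real_normed_vector) \<Rightarrow> 'a set" where
  "norm_attainment_set T = {x. norm x = 1 \<and> norm (blinfun_apply T x) = norm T}"

definition bj_orth :: "'a::real_normed_vector \<Rightarrow> 'a \<Rightarrow> bool" where
  "bj_orth x y \<longleftrightarrow> (\<forall>t::real. norm (x + t *\<^sub>R y) \<ge> norm x)"

definition hyperspace :: "'a::real_normed_vector set \<Rightarrow> bool" where
  "hyperspace H \<longleftrightarrow> subspace H \<and> closed H \<and>
     (\<exists>v. v \<notin> H \<and> (\<forall>y. \<exists>h\<in>H. \<exists>t::real. y = h + t *\<^sub>R v))"

definition norm_on :: "'a::real_normed_vector set \<Rightarrow> ('a \<Rightarrow>\<^sub>L 'b::real_normed_vector) \<Rightarrow> real" where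
  "norm_on H T = Sup {norm (blinfun_apply T h) | h. h \<in> H \<and> norm h = 1}"

definition extreme_contraction :: "('a::real_normed_vector \<Rightarrow>\<^sub>L 'b::real_normed_vector) \<Rightarrow> bool" where
  "extreme_contraction T \<longleftrightarrow> norm T = 1 \<and> T extreme_point_of cball 0 1"

definition CPP :: "'a::real_normed_vector \<Rightarrow> 'b::real_normed_vector \<Rightarrow> real \<Rightarrow> real \<Rightarrow> bool" where
  "CPP x v r \<mu> \<longleftrightarrow> norm x = 1 \<and> norm v = 1 \<and> r > 0 \<and> \<mu> > 0 \<and>
     (\<forall>z w (a::real) (b::real). norm z = 1 \<and> bj_orth x z \<and> norm w = 1 \<and> bj_orth v w \<and>
        dist (a *\<^sub>R x + b *\<^sub>R z) x < r \<and> norm (a *\<^sub>R x + b *\<^sub>R z) = 1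
        \<longrightarrow> norm (a *\<^sub>R v + (b * \<mu>) *\<^sub>R w) \<le> 1)"

end

theory Submission
  imports Defs
begin

lemma supp_ex:
  assumes "smooth_space TYPE('a::real_normed_vector)" "norm (x::'a) = 1"
  shows "\<exists>f::'a \<Rightarrow>\<^sub>L real. norm f = 1 \<and> blinfun_apply f x = 1"
  using assms unfolding smooth_space_def by metis

lemma supp_unique:
  assumes "smooth_space TYPE('a::real_normed_vector)" "norm (x::'a) = 1"
    "norm (f::'a \<Rightarrow>\<^sub>L real) = 1" "blinfun_apply f x = 1" "norm (g::'a \<Rightarrow>\<^sub>L real) = 1" "blinfun_apply g x = 1"
  shows "f = g"
  using assms unfolding smooth_space_def by metis

lemma norming:
  assumes "smooth_space TYPE('a::real_normed_vector)"
  shows "\<exists>f::'a \<Rightarrow>\<^sub>L real. norm f \<le> 1 \<and> blinfun_apply f x = norm x"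
proof (cases "x = 0")
  case True then show ?thesis by (intro exI[of _ 0]) auto
next
  case False
  then have "norm (x /\<^sub>R norm x) = 1" by simp
  then obtain f :: "'a \<Rightarrow>\<^sub>L real" where f: "norm f = 1" "blinfun_apply f (x /\<^sub>R norm x) = 1"
    using supp_ex[OF assms] by blast
  then have "blinfun_apply f x = norm x" using False by (simp add: blinfun.scaleR_right field_simps)
  with f show ?thesis by (intro exI[of _ f]) auto
qed

lemma separate:
  assumes "smooth_space TYPE('a::real_normed_vector)" "\<And>f::'a \<Rightarrow>\<^sub>L real. blinfun_apply f u = blinfun_apply f v"
  shows "u = v"
proof -
  obtain f :: "'a \<Rightarrow>\<^sub>L real" where "blinfun_apply f (u - v) = norm (u - v)" using norming[OF assms(1)] by blast
  then have "norm (u - v) = 0" using assms(2)[of f] by (simp add: blinfun.diff_right)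
  then show ?thesis by simp
qed

lemma abs3: fixes a b c e :: real shows "\<bar>a\<bar> < e \<Longrightarrow> \<bar>b\<bar> < e \<Longrightarrow> \<bar>c\<bar> < e \<Longrightarrow> \<bar>a + b - c\<bar> < 3*e"
  by arith

lemma abs2: fixes x y z :: real shows "\<bar>x - y\<bar> < \<bar>y - z\<bar> / 2 \<Longrightarrow> \<bar>x - z\<bar> < \<bar>y - z\<bar> / 2 \<Longrightarrow> False"
  by (smt (verit) abs_triangle_ineq4 field_sum_of_halves)

lemma weak_cluster:
  fixes y :: "nat \<Rightarrow> 'a::real_normed_vector"
  assumes refl: "reflexive_space TYPE('a)" and sm: "smooth_space TYPE('a)"
    and yb: "\<And>n. norm (y n) \<le> 1"
  shows "\<exists>x. norm x \<le> 1 \<and> (\<forall>(g::'a \<Rightarrow>\<^sub>L real) c. (\<lambda>n. blinfun_apply g (y n)) \<longlonglongrightarrow> c \<longrightarrow> blinfun_apply g x = c)"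
proof -
  define F where "F n = (\<lambda>g::'a \<Rightarrow>\<^sub>L real. blinfun_apply g (y n))" for n
  define K where "K = PiE (UNIV :: ('a \<Rightarrow>\<^sub>L real) set) (\<lambda>g. {-norm g..norm g})"
  have "compactin (product_topology (\<lambda>i. euclidean) UNIV) K"
    unfolding K_def by (subst compactin_PiE) auto
  then have cK: "compact K" by (simp add: euclidean_product_topology)
  have FK: "F n \<in> K" for n
  proof -
    have "\<bar>blinfun_apply g (y n)\<bar> \<le> norm g" for g
      using norm_blinfun[of g "y n"] yb[of n] norm_ge_zero[of g]
      by (metis mult_left_le mult.commute order_trans real_norm_def)
    then have "\<forall>g. blinfun_apply g (y n) \<in> {-norm g..norm g}"
      by (metis abs_le_iff atLeastAtMost_iff minus_le_iff)
    then show ?thesis unfolding K_def F_def by auto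
  qed
  have "filtermap F sequentially \<noteq> bot" by (simp add: filtermap_bot_iff)
  moreover have "eventually (\<lambda>x. x \<in> K) (filtermap F sequentially)"
    by (simp add: eventually_filtermap FK)
  ultimately obtain \<Phi> where PK: "\<Phi> \<in> K" and nb: "inf (nhds \<Phi>) (filtermap F sequentially) \<noteq> bot"
    using cK unfolding compact_filter by blast
  have freq: "\<exists>n\<ge>N. F n \<in> U" if "open U" "\<Phi> \<in> U" for U N
  proof (rule ccontr)
    assume "\<not> ?thesis"
    then have "eventually (\<lambda>z. z \<notin> U) (filtermap F sequentially)"
      by (auto simp: eventually_filtermap eventually_sequentially)
    moreover have "eventually (\<lambda>z. z \<in> U) (nhds \<Phi>)" using that by (rule eventually_nhds_in_open)
    ultimately have "eventually (\<lambda>_. False) (inf (nhds \<Phi>) (filtermap F sequentially))"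
      unfolding eventually_inf by blast
    with nb show False by (simp add: eventually_False)
  qed
  have opn: "open {\<Psi>::('a \<Rightarrow>\<^sub>L real) \<Rightarrow> real. \<forall>i\<in>I. \<Psi> i \<in> ball (\<Phi> i) e}" if "finite I" for I e
    using product_topology_basis'[where I=I and x=id and U="\<lambda>i. ball (\<Phi> i) e"] that by simp
  have add: "\<Phi> (g + h) = \<Phi> g + \<Phi> h" for g h
  proof (rule ccontr)
    assume ne: "\<Phi> (g + h) \<noteq> \<Phi> g + \<Phi> h"
    define e where "e = \<bar>\<Phi> (g + h) - \<Phi> g - \<Phi> h\<bar> / 3"
    have e: "e > 0" using ne by (simp add: e_def)
    obtain n where "F n \<in> {\<Psi>. \<forall>i\<in>{g,h,g+h}. \<Psi> i \<in> ball (\<Phi> i) e}"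
      using freq[OF opn[of "{g,h,g+h}" e], of 0] e by auto
    then have "\<bar>F n g - \<Phi> g\<bar> < e" "\<bar>F n h - \<Phi> h\<bar> < e" "\<bar>F n (g+h) - \<Phi> (g+h)\<bar> < e"
      by (auto simp: dist_real_def abs_minus_commute)
    moreover have "F n (g+h) = F n g + F n h" by (simp add: F_def blinfun.add_left)
    ultimately have "\<bar>(F n g - \<Phi> g) + (F n h - \<Phi> h) - (F n (g+h) - \<Phi> (g+h))\<bar> < 3 * e"
      by (intro abs3) auto
    moreover have "(F n g - \<Phi> g) + (F n h - \<Phi> h) - (F n (g+h) - \<Phi> (g+h)) = (\<Phi> (g + h) - \<Phi> g - \<Phi> h)"
      using \<open>F n (g+h) = F n g + F n h\<close> by simp
    ultimately show False unfolding e_def by simp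
  qed
  have scl: "\<Phi> (c *\<^sub>R g) = c * \<Phi> g" for c g
  proof (rule ccontr)
    assume ne: "\<Phi> (c *\<^sub>R g) \<noteq> c * \<Phi> g"
    define e where "e = \<bar>\<Phi> (c *\<^sub>R g) - c * \<Phi> g\<bar> / (1 + \<bar>c\<bar>)"
    have e: "e > 0" using ne by (simp add: e_def add_pos_nonneg)
    obtain n where "F n \<in> {\<Psi>. \<forall>i\<in>{g, c *\<^sub>R g}. \<Psi> i \<in> ball (\<Phi> i) e}"
      using freq[OF opn[of "{g, c *\<^sub>R g}" e], of 0] e by auto
    then have 1: "\<bar>F n g - \<Phi> g\<bar> < e" and 2: "\<bar>F n (c *\<^sub>R g) - \<Phi> (c *\<^sub>R g)\<bar> < e"
      by (auto simp: dist_real_def abs_minus_commute)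
    have 3: "F n (c *\<^sub>R g) = c * F n g" by (simp add: F_def blinfun.scaleR_left)
    have "\<bar>c * F n g - c * \<Phi> g\<bar> \<le> \<bar>c\<bar> * e"
      using 1 by (simp add: abs_mult mult_left_mono flip: right_diff_distrib)
    then have "\<bar>\<Phi> (c *\<^sub>R g) - c * \<Phi> g\<bar> < e + \<bar>c\<bar> * e" using 2 3 by linarith
    also have "\<dots> = (1 + \<bar>c\<bar>) * e" by (simp add: algebra_simps)
    also have "\<dots> = \<bar>\<Phi> (c *\<^sub>R g) - c * \<Phi> g\<bar>" unfolding e_def
      by (simp add: add_pos_nonneg)
    finally show False by simp
  qed
  have bnd: "\<bar>\<Phi> g\<bar> \<le> norm g" for g using PK unfolding K_def PiE_iff
    by (metis UNIV_I abs_le_iff atLeastAtMost_iff minus_le_iff)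
  have bl: "bounded_linear \<Phi>"
    by (rule bounded_linear_intro[of _ 1]) (use add scl bnd in auto)
  obtain x where x: "\<And>f. blinfun_apply (Blinfun \<Phi>) f = blinfun_apply f x"
    using refl unfolding reflexive_space_def by blast
  have Px: "\<Phi> f = blinfun_apply f x" for f using x[of f] bl by (simp add: bounded_linear_Blinfun_apply)
  obtain f0 :: "'a \<Rightarrow>\<^sub>L real" where f0: "norm f0 \<le> 1" "blinfun_apply f0 x = norm x"
    using norming[OF sm] by blast
  have "norm x \<le> 1" using bnd[of f0] f0 Px[of f0] by simp
  moreover have "blinfun_apply g x = c" if lim: "(\<lambda>n. blinfun_apply g (y n)) \<longlonglongrightarrow> c" for g :: "'a \<Rightarrow>\<^sub>L real" and c
  proof (rule ccontr)
    assume ne: "blinfun_apply g x \<noteq> c"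
    define e where "e = \<bar>\<Phi> g - c\<bar> / 2"
    have e: "e > 0" using ne Px by (simp add: e_def)
    obtain N where N: "\<And>n. n \<ge> N \<Longrightarrow> \<bar>blinfun_apply g (y n) - c\<bar> < e"
      using lim e unfolding LIMSEQ_def by (auto simp: dist_real_def)
    obtain n where "n \<ge> N" "F n \<in> {\<Psi>. \<forall>i\<in>{g}. \<Psi> i \<in> ball (\<Phi> i) e}"
      using freq[OF opn[of "{g}" e], of N] e by auto
    then have "\<bar>F n g - \<Phi> g\<bar> < e" "\<bar>F n g - c\<bar> < e"
      using N by (auto simp: dist_real_def abs_minus_commute F_def)
    then show False unfolding e_def by (rule abs2)
  qed
  ultimately show ?thesis by (intro exI[of _ x]) auto
qed

lemma compact_subseq:
  fixes T :: "'a::real_normed_vector \<Rightarrow>\<^sub>L 'b::real_normed_vector" and y :: "nat \<Rightarrow> 'a"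
  assumes "compact_op T" "\<And>n. norm (y n) \<le> 1"
  shows "\<exists>r u. strict_mono r \<and> (\<lambda>n. blinfun_apply T (y (r n))) \<longlonglongrightarrow> u"
proof -
  have sc: "seq_compact (closure (blinfun_apply T ` cball 0 1))"
    using assms(1) unfolding compact_op_def by (rule compact_imp_seq_compact)
  have "\<forall>n. blinfun_apply T (y n) \<in> closure (blinfun_apply T ` cball 0 1)"
    using assms(2) closure_subset by fastforce
  from seq_compactE[OF sc, of "\<lambda>n. blinfun_apply T (y n)", OF this] obtain l r where "strict_mono r" "((\<lambda>n. blinfun_apply T (y n)) \<circ> r) \<longlonglongrightarrow> l"
    by blast
  then show ?thesis by (auto simp: o_def)
qed

lemma clusterT:
  fixes T :: "'a::real_normed_vector \<Rightarrow>\<^sub>L 'b::real_normed_vector"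
  assumes refl: "reflexive_space TYPE('a)" and smX: "smooth_space TYPE('a)"
    and smY: "smooth_space TYPE('b)"
    and yb: "\<And>n. norm (y n) \<le> 1" and lim: "(\<lambda>n. blinfun_apply T (y n)) \<longlonglongrightarrow> u"
  shows "\<exists>x. norm x \<le> 1 \<and> blinfun_apply T x = u \<and>
     (\<forall>(g::'a \<Rightarrow>\<^sub>L real) c. (\<lambda>n. blinfun_apply g (y n)) \<longlonglongrightarrow> c \<longrightarrow> blinfun_apply g x = c)"
proof -
  obtain x where x: "norm x \<le> 1" and w: "\<forall>(g::'a \<Rightarrow>\<^sub>L real) c. (\<lambda>n. blinfun_apply g (y n)) \<longlonglongrightarrow> c \<longrightarrow> blinfun_apply g x = c"
    using weak_cluster[where y=y, OF refl smX yb] by blast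
  have "blinfun_apply T x = u"
  proof (rule separate[OF smY])
    fix g :: "'b \<Rightarrow>\<^sub>L real"
    have "(\<lambda>n. blinfun_apply g (blinfun_apply T (y n))) \<longlonglongrightarrow> blinfun_apply g u"
      using lim by (rule bounded_linear.tendsto[OF blinfun.bounded_linear_right])
    then have "(\<lambda>n. blinfun_apply (g o\<^sub>L T) (y n)) \<longlonglongrightarrow> blinfun_apply g u" by simp
    then have "blinfun_apply (g o\<^sub>L T) x = blinfun_apply g u" using w by blast
    then show "blinfun_apply g (blinfun_apply T x) = blinfun_apply g u" by simp
  qed
  with x w show ?thesis by blast
qed

lemma approx_norm:
  fixes T :: "'a::real_normed_vector \<Rightarrow>\<^sub>L 'b::real_normed_vector"
  assumes "norm T = 1" "0 < e" "e < 1"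
  shows "\<exists>y. norm y = 1 \<and> norm (blinfun_apply T y) > 1 - e"
proof (rule ccontr)
  assume "\<not> ?thesis"
  then have h: "norm (blinfun_apply T y) \<le> 1 - e" if "norm y = 1" for y using that by force
  have "norm (blinfun_apply T y) \<le> (1 - e) * norm y" for y
  proof (cases "y = 0")
    case False
    then have "norm (blinfun_apply T (y /\<^sub>R norm y)) \<le> 1 - e" by (intro h) simp
    then show ?thesis using False by (simp add: blinfun.scaleR_right field_simps)
  qed simp
  then have "norm T \<le> 1 - e" using assms by (intro norm_blinfun_bound) auto
  with assms show False by simp
qed

lemma attain:
  fixes T :: "'a::real_normed_vector \<Rightarrow>\<^sub>L 'b::real_normed_vector"
  assumes refl: "reflexive_space TYPE('a)" and smX: "smooth_space TYPE('a)"
    and smY: "smooth_space TYPE('b)" and cT: "compact_op T" and nT: "norm T = 1"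
  shows "\<exists>x. norm x = 1 \<and> norm (blinfun_apply T x) = 1"
proof -
  have "\<exists>y. norm y = 1 \<and> norm (blinfun_apply T y) > 1 - 1 / (real n + 2)" for n
    by (rule approx_norm[OF nT]) (simp_all add: field_simps)
  then obtain y where y: "\<And>n. norm (y n) = 1" "\<And>n. norm (blinfun_apply T (y n)) > 1 - 1 / (real n + 2)"
    by metis
  obtain r u where r: "strict_mono r" and lim: "(\<lambda>n. blinfun_apply T (y (r n))) \<longlonglongrightarrow> u"
    using compact_subseq[OF cT, of y] y(1) by auto
  obtain x where x: "norm x \<le> 1" "blinfun_apply T x = u"
    using clusterT[OF refl smX smY, where y="\<lambda>n. y (r n)" and u=u and T=T] y(1) lim by auto
  have ln: "(\<lambda>n. norm (blinfun_apply T (y (r n)))) \<longlonglongrightarrow> norm u" using lim by (rule tendsto_norm)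
  have "(\<lambda>n. 1 - 1 / (real n + 2)) \<longlonglongrightarrow> 1 - 0"
    by (intro tendsto_intros) real_asymp
  moreover have "1 - 1 / (real n + 2) \<le> norm (blinfun_apply T (y (r n)))" for n
  proof -
    have "n \<le> r n" using r by (rule seq_suble)
    then have "1 / (real (r n) + 2) \<le> 1 / (real n + 2)" by (simp add: frac_le)
    then show ?thesis using y(2)[of "r n"] by linarith
  qed
  ultimately have "1 \<le> norm u" using ln by (auto intro: LIMSEQ_le)
  moreover have "norm u \<le> norm x" using x norm_blinfun[of T x] nT by simp
  ultimately have "norm x = 1" "norm u = 1" using x(1) by linarith+
  with x show ?thesis by auto
qed

definition rk :: "('a::real_normed_vector \<Rightarrow>\<^sub>L real) \<Rightarrow> 'b::real_normed_vector \<Rightarrow> ('a \<Rightarrow>\<^sub>L 'b)" where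
  "rk \<phi> v = Blinfun (\<lambda>z. blinfun_apply \<phi> z *\<^sub>R v)"

lemma rk_apply: "blinfun_apply (rk \<phi> v) z = blinfun_apply \<phi> z *\<^sub>R v"
proof -
  have "bounded_linear (\<lambda>z. blinfun_apply \<phi> z *\<^sub>R v)"
    by (rule bounded_linear_compose[OF bounded_linear_scaleR_left blinfun.bounded_linear_right])
  then show ?thesis unfolding rk_def by (simp add: bounded_linear_Blinfun_apply)
qed

lemma rk_compact: "compact_op (rk \<phi> v)"
proof -
  define K where "K = (\<lambda>t. t *\<^sub>R v) ` {-norm \<phi>..norm \<phi>}"
  have cK: "compact K" unfolding K_def
    by (intro compact_continuous_image continuous_intros) auto
  have "blinfun_apply (rk \<phi> v) ` cball 0 1 \<subseteq> K"
  proof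
    fix w assume "w \<in> blinfun_apply (rk \<phi> v) ` cball 0 1"
    then obtain z where z: "norm z \<le> 1" "w = blinfun_apply \<phi> z *\<^sub>R v" by (auto simp: rk_apply)
    have "\<bar>blinfun_apply \<phi> z\<bar> \<le> norm \<phi>"
      using norm_blinfun[of \<phi> z] z(1) norm_ge_zero[of \<phi>]
      by (metis mult_left_le order_trans real_norm_def)
    then show "w \<in> K" unfolding K_def using z(2) by (auto simp: abs_le_iff)
  qed
  then have "closure (blinfun_apply (rk \<phi> v) ` cball 0 1) \<subseteq> K"
    using cK by (simp add: closure_minimal compact_imp_closed)
  then show ?thesis unfolding compact_op_def
    using compact_Int_closed[OF cK closed_closure, of "blinfun_apply (rk \<phi> v) ` cball 0 1"]
    by (simp add: Int_absorb1)
qed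

lemma Kfun:
  fixes T :: "'a::real_normed_vector \<Rightarrow>\<^sub>L 'b::real_normed_vector" and g :: "'b \<Rightarrow>\<^sub>L real"
  assumes "norm g = 1" "norm z = 1" "blinfun_apply g (blinfun_apply T z) = 1" "compact_op T" "norm T = 1"
  shows "K_norm_one_functional (\<lambda>A::'a \<Rightarrow>\<^sub>L 'b. blinfun_apply g (blinfun_apply A z))"
proof -
  have bd: "\<bar>blinfun_apply g (blinfun_apply A z)\<bar> \<le> norm A" for A :: "'a \<Rightarrow>\<^sub>L 'b"
  proof -
    have "\<bar>blinfun_apply g (blinfun_apply A z)\<bar> \<le> norm g * norm (blinfun_apply A z)"
      using norm_blinfun[of g] by (metis real_norm_def)
    also have "\<dots> \<le> norm A" using assms(1,2) norm_blinfun[of A z] by simp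
    finally show ?thesis .
  qed
  have "Sup {\<bar>blinfun_apply g (blinfun_apply A z)\<bar> | A. compact_op A \<and> norm A = 1} = 1"
  proof (rule cSup_eq_maximum)
    show "1 \<in> {\<bar>blinfun_apply g (blinfun_apply A z)\<bar> | A. compact_op A \<and> norm A = 1}"
      using assms by force
    show "x \<le> 1" if "x \<in> {\<bar>blinfun_apply g (blinfun_apply A z)\<bar> | A. compact_op A \<and> norm A = 1}" for x
    proof -
      from that obtain A where "x = \<bar>blinfun_apply g (blinfun_apply A z)\<bar>" "norm A = 1" by blast
      then show "x \<le> 1" using bd[of A] by simp
    qed
  qed
  moreover have "\<exists>C. \<forall>A. compact_op A \<longrightarrow> \<bar>blinfun_apply g (blinfun_apply A z)\<bar> \<le> C * norm A"
    using bd by (intro exI[of _ 1]) auto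
  ultimately show ?thesis unfolding K_norm_one_functional_def
    by (simp add: blinfun.add_left blinfun.add_right blinfun.scaleR_left blinfun.scaleR_right)
qed

lemma MT_pm:
  fixes T :: "'a::real_normed_vector \<Rightarrow>\<^sub>L 'b::real_normed_vector"
  assumes smX: "smooth_space TYPE('a)" and smY: "smooth_space TYPE('b)"
    and sT: "smooth_operator T"
    and x: "norm x = 1" "norm (blinfun_apply T x) = 1"
    and y: "norm y = 1" "norm (blinfun_apply T y) = 1"
  shows "y = x \<or> y = - x"
proof -
  have cT: "compact_op T" and nT: "norm T = 1" using sT unfolding smooth_operator_def by auto
  obtain g1 :: "'b \<Rightarrow>\<^sub>L real" where g1: "norm g1 = 1" "blinfun_apply g1 (blinfun_apply T x) = 1"
    using supp_ex[OF smY x(2)] by blast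
  obtain g2 :: "'b \<Rightarrow>\<^sub>L real" where g2: "norm g2 = 1" "blinfun_apply g2 (blinfun_apply T y) = 1"
    using supp_ex[OF smY y(2)] by blast
  have K1: "K_norm_one_functional (\<lambda>A::'a \<Rightarrow>\<^sub>L 'b. blinfun_apply g1 (blinfun_apply A x))"
    using Kfun[OF g1(1) x(1) g1(2) cT nT] .
  have K2: "K_norm_one_functional (\<lambda>A::'a \<Rightarrow>\<^sub>L 'b. blinfun_apply g2 (blinfun_apply A y))"
    using Kfun[OF g2(1) y(1) g2(2) cT nT] .
  have eq: "blinfun_apply g1 (blinfun_apply A x) = blinfun_apply g2 (blinfun_apply A y)" if "compact_op A" for A
    using sT K1 K2 g1 g2 nT that unfolding smooth_operator_def by metis
  define c where "c = blinfun_apply g2 (blinfun_apply T x)"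
  have "x = c *\<^sub>R y"
  proof (rule separate[OF smX])
    fix \<phi> :: "'a \<Rightarrow>\<^sub>L real"
    have "blinfun_apply g1 (blinfun_apply (rk \<phi> (blinfun_apply T x)) x) =
          blinfun_apply g2 (blinfun_apply (rk \<phi> (blinfun_apply T x)) y)"
      by (rule eq[OF rk_compact])
    then show "blinfun_apply \<phi> x = blinfun_apply \<phi> (c *\<^sub>R y)"
      by (simp add: rk_apply blinfun.scaleR_right g1 c_def)
  qed
  then have "norm x = \<bar>c\<bar> * norm y" by simp
  then have "\<bar>c\<bar> = 1" using x y by simp
  then have "c = 1 \<or> c = -1" by auto
  then show ?thesis using \<open>x = c *\<^sub>R y\<close> by auto
qed

lemma limnorm:
  fixes T :: "'a::real_normed_vector \<Rightarrow>\<^sub>L 'b::real_normed_vector"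
  assumes nT: "norm T = 1" and y: "\<And>n. norm (y n) = 1" "\<And>n. norm (blinfun_apply T (y n)) > 1 - 1 / (real n + 2)"
    and r: "strict_mono r" and lim: "(\<lambda>n. blinfun_apply T (y (r n))) \<longlonglongrightarrow> u"
  shows "norm u = 1"
proof -
  have ln: "(\<lambda>n. norm (blinfun_apply T (y (r n)))) \<longlonglongrightarrow> norm u" using lim by (rule tendsto_norm)
  have "(\<lambda>n. 1 - 1 / (real n + 2)) \<longlonglongrightarrow> 1 - 0"
    by (intro tendsto_intros) real_asymp
  moreover have "1 - 1 / (real n + 2) \<le> norm (blinfun_apply T (y (r n)))" for n
  proof -
    have "n \<le> r n" using r by (rule seq_suble)
    then have "1 / (real (r n) + 2) \<le> 1 / (real n + 2)" by (simp add: frac_le)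
    then show ?thesis using y(2)[of "r n"] by linarith
  qed
  ultimately have "1 \<le> norm u" using ln by (auto intro: LIMSEQ_le)
  moreover have "norm (blinfun_apply T (y (r n))) \<le> 1" for n
    using norm_blinfun[of T "y (r n)"] nT y(1) by simp
  then have "norm u \<le> 1" using ln by (intro LIMSEQ_le_const2) auto
  ultimately show ?thesis by simp
qed

lemma gap:
  fixes T :: "'a::real_normed_vector \<Rightarrow>\<^sub>L 'b::real_normed_vector"
  assumes refl: "reflexive_space TYPE('a)" and smX: "smooth_space TYPE('a)"
    and smY: "smooth_space TYPE('b)" and kk: "kadets_klee TYPE('a)"
    and sT: "smooth_operator T"
    and x: "norm x = 1" "norm (blinfun_apply T x) = 1" and rho: "\<rho> > 0"
  shows "\<exists>\<eta>>0. \<forall>y. norm y = 1 \<and> \<rho> \<le> dist y x \<and> \<rho> \<le> dist y (-x) \<longrightarrow> norm (blinfun_apply T y) \<le> 1 - \<eta>"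
proof (rule ccontr)
  assume na: "\<not> ?thesis"
  have cT: "compact_op T" and nT: "norm T = 1" using sT unfolding smooth_operator_def by auto
  have "\<exists>y. (norm y = 1 \<and> \<rho> \<le> dist y x \<and> \<rho> \<le> dist y (-x)) \<and> norm (blinfun_apply T y) > 1 - 1 / (real n + 2)" for n
  proof -
    have "(1::real) / (real n + 2) > 0" by simp
    then show ?thesis using na by (meson not_le)
  qed
  then obtain y where y: "\<And>n. norm (y n) = 1" "\<And>n. \<rho> \<le> dist (y n) x" "\<And>n. \<rho> \<le> dist (y n) (-x)"
    "\<And>n. norm (blinfun_apply T (y n)) > 1 - 1 / (real n + 2)"
    by metis
  obtain r u where r: "strict_mono r" and lim: "(\<lambda>n. blinfun_apply T (y (r n))) \<longlonglongrightarrow> u"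
    using compact_subseq[OF cT, of y] y(1) by auto
  have nu: "norm u = 1" using limnorm[OF nT y(1) y(4) r lim] .
  define z where "z n = y (r n)" for n
  have z1: "norm (z n) = 1" for n using y(1) by (simp add: z_def)
  have limz: "(\<lambda>n. blinfun_apply T (z n)) \<longlonglongrightarrow> u" using lim by (simp add: z_def)
  have MT: "w = x \<or> w = - x" if "norm w \<le> 1" "blinfun_apply T w = u" for w
  proof -
    have "1 \<le> norm w" using that nu norm_blinfun[of T w] nT by simp
    then have "norm w = 1" using that by simp
    then show ?thesis using MT_pm[OF smX smY sT x, of w] that nu by simp
  qed
  obtain x1 where x1: "norm x1 \<le> 1" "blinfun_apply T x1 = u"
    "\<forall>(g::'a \<Rightarrow>\<^sub>L real) c. (\<lambda>n. blinfun_apply g (z n)) \<longlonglongrightarrow> c \<longrightarrow> blinfun_apply g x1 = c"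
    using clusterT[OF refl smX smY, where y=z and u=u and T=T] z1 limz by auto
  have x1pm: "x1 = x \<or> x1 = - x" using MT x1 by blast
  then have nx1: "norm x1 = 1" using x by auto
  have same: "w = x1" if "norm w \<le> 1" "blinfun_apply T w = u" for w
  proof -
    have "w = x \<or> w = - x" using MT that by blast
    moreover have "w \<noteq> - x1"
    proof
      assume "w = - x1"
      then have "u = - u" using that x1 by (simp add: blinfun.minus_right)
      then have "(2::real) *\<^sub>R u = 0" by (simp add: scaleR_2 eq_neg_iff_add_eq_0)
      then show False using nu by simp
    qed
    ultimately show ?thesis using x1pm by auto
  qed
  have wc: "weakly_converges z x1"
    unfolding weakly_converges_def
  proof (intro allI, rule ccontr)
    fix \<phi> :: "'a \<Rightarrow>\<^sub>L real"
    assume nc: "\<not> (\<lambda>n. blinfun_apply \<phi> (z n)) \<longlonglongrightarrow> blinfun_apply \<phi> x1"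
    then obtain e where e: "e > 0" "\<forall>N. \<exists>n\<ge>N. e \<le> \<bar>blinfun_apply \<phi> (z n) - blinfun_apply \<phi> x1\<bar>"
      unfolding LIMSEQ_def dist_real_def by (meson not_le)
    then have "infinite {n. e \<le> \<bar>blinfun_apply \<phi> (z n) - blinfun_apply \<phi> x1\<bar>}"
      by (simp add: infinite_nat_iff_unbounded_le)
    then obtain r2 :: "nat \<Rightarrow> nat" where r2: "strict_mono r2"
      "\<And>n. e \<le> \<bar>blinfun_apply \<phi> (z (r2 n)) - blinfun_apply \<phi> x1\<bar>"
      using infinite_enumerate by blast
    have "bounded (range (\<lambda>n. blinfun_apply \<phi> (z (r2 n))))"
    proof -
      have "norm (blinfun_apply \<phi> (z (r2 n))) \<le> norm \<phi>" for n
        using norm_blinfun[of \<phi> "z (r2 n)"] z1 by simp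
      then show ?thesis by (auto simp: bounded_iff)
    qed
    then obtain c r3 where r3: "strict_mono r3" "((\<lambda>n. blinfun_apply \<phi> (z (r2 n))) \<circ> r3) \<longlonglongrightarrow> c"
      using bounded_imp_convergent_subsequence by blast
    define w where "w n = z (r2 (r3 n))" for n
    have w1: "norm (w n) \<le> 1" for n using z1 by (simp add: w_def)
    have "((\<lambda>n. blinfun_apply T (z n)) \<circ> (r2 \<circ> r3)) \<longlonglongrightarrow> u"
      using limz r2(1) r3(1) by (intro LIMSEQ_subseq_LIMSEQ strict_mono_o)
    then have limw: "(\<lambda>n. blinfun_apply T (w n)) \<longlonglongrightarrow> u" by (simp add: w_def o_def)
    obtain x2 where x2: "norm x2 \<le> 1" "blinfun_apply T x2 = u"
      "\<forall>(g::'a \<Rightarrow>\<^sub>L real) c. (\<lambda>n. blinfun_apply g (w n)) \<longlonglongrightarrow> c \<longrightarrow> blinfun_apply g x2 = c"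
      using clusterT[OF refl smX smY, where y=w and u=u and T=T] w1 limw by auto
    have wc: "(\<lambda>n. blinfun_apply \<phi> (w n)) \<longlonglongrightarrow> c" using r3(2) by (simp add: w_def o_def)
    then have "blinfun_apply \<phi> x2 = c" using x2(3) by blast
    moreover have "x2 = x1" using same x2 by blast
    moreover have "e \<le> \<bar>c - blinfun_apply \<phi> x1\<bar>"
    proof (rule LIMSEQ_le_const)
      show "(\<lambda>n. \<bar>blinfun_apply \<phi> (w n) - blinfun_apply \<phi> x1\<bar>) \<longlonglongrightarrow> \<bar>c - blinfun_apply \<phi> x1\<bar>"
        by (intro tendsto_intros wc)
      show "\<exists>N. \<forall>n\<ge>N. e \<le> \<bar>blinfun_apply \<phi> (w n) - blinfun_apply \<phi> x1\<bar>"
        using r2(2) by (auto simp: w_def)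
    qed
    ultimately show False using e by simp
  qed
  have "(\<lambda>n. norm (z n)) \<longlonglongrightarrow> norm x1" using z1 nx1 by simp
  then have zc: "z \<longlonglongrightarrow> x1" using kk wc unfolding kadets_klee_def by blast
  then have "(\<lambda>n. dist (z n) x1) \<longlonglongrightarrow> 0" using tendsto_dist_iff by blast
  then obtain N where "dist (z N) x1 < \<rho>" using rho unfolding LIMSEQ_def by fastforce
  moreover have "\<rho> \<le> dist (z N) x1" using x1pm y(2,3) by (auto simp: z_def)
  ultimately show False by simp
qed

lemma fbound: "norm (f::'a::real_normed_vector \<Rightarrow>\<^sub>L real) \<le> 1 \<Longrightarrow> \<bar>blinfun_apply f y\<bar> \<le> norm y"
  using norm_blinfun[of f y] norm_ge_zero[of y]
  by (metis mult_left_le_one_le order_trans real_norm_def mult.commute mult_right_le_one_le norm_ge_zero)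

lemma hyp_exists:
  fixes f :: "'a::real_normed_vector \<Rightarrow>\<^sub>L real"
  assumes "norm f = 1" "blinfun_apply f x = 1" "norm x = 1"
  shows "hyperspace {y. blinfun_apply f y = 0} \<and> (\<forall>h\<in>{y. blinfun_apply f y = 0}. bj_orth x h)"
proof -
  have "subspace {y. blinfun_apply f y = 0}"
    by (simp add: subspace_def blinfun.add_right blinfun.scaleR_right)
  moreover have "closed {y. blinfun_apply f y = 0}"
    by (intro closed_Collect_eq continuous_intros)
  moreover have "\<exists>h\<in>{y. blinfun_apply f y = 0}. \<exists>t::real. y = h + t *\<^sub>R x" for y
    by (intro bexI[of _ "y - blinfun_apply f y *\<^sub>R x"] exI[of _ "blinfun_apply f y"])
       (auto simp: blinfun.diff_right blinfun.scaleR_right assms)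
  moreover have "bj_orth x h" if "blinfun_apply f h = 0" for h
    unfolding bj_orth_def
  proof
    fix t :: real
    have "blinfun_apply f (x + t *\<^sub>R h) = 1" using assms that
      by (simp add: blinfun.add_right blinfun.scaleR_right)
    then show "norm x \<le> norm (x + t *\<^sub>R h)"
      using fbound[of f "x + t *\<^sub>R h"] assms norm_blinfun[of f x] by simp
  qed
  ultimately show ?thesis unfolding hyperspace_def using assms by (intro conjI; (intro exI[of _ x])?) auto
qed

lemma hyp_unique:
  fixes f :: "'a::real_normed_vector \<Rightarrow>\<^sub>L real"
  assumes smX: "smooth_space TYPE('a)" and f: "norm f = 1" "blinfun_apply f x = 1" and x: "norm x = 1"
    and H: "hyperspace H" and orth: "\<forall>h\<in>H. bj_orth x h"
  shows "H = {y. blinfun_apply f y = 0}"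
proof -
  have sH: "subspace H" using H unfolding hyperspace_def by blast
  obtain v where v: "v \<notin> H" "\<And>y. \<exists>h\<in>H. \<exists>t::real. y = h + t *\<^sub>R v"
    using H unfolding hyperspace_def by blast
  have xH: "x \<notin> H"
  proof
    assume "x \<in> H"
    then have "norm x \<le> norm (x + (-1) *\<^sub>R x)" using orth unfolding bj_orth_def by blast
    then show False using x by simp
  qed
  have key: "\<bar>s\<bar> \<le> norm (h + s *\<^sub>R x)" if "h \<in> H" for h s
  proof (cases "s = 0")
    case False
    have "norm x \<le> norm (x + (1/s) *\<^sub>R h)" using orth that unfolding bj_orth_def by blast
    moreover have "h + s *\<^sub>R x = s *\<^sub>R (x + (1/s) *\<^sub>R h)" using False by (simp add: algebra_simps)
    ultimately show ?thesis using x mult_left_mono[of 1 "norm (x + (1/s) *\<^sub>R h)" "\<bar>s\<bar>"] by simp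
  qed simp
  have dec: "\<exists>h\<in>H. \<exists>s::real. y = h + s *\<^sub>R x" for y
  proof -
    obtain h0 t0 where h0: "h0 \<in> H" "x = h0 + t0 *\<^sub>R v" using v(2) by blast
    have t0: "t0 \<noteq> 0" using h0 xH by auto
    obtain h t where h: "h \<in> H" "y = h + t *\<^sub>R v" using v(2) by blast
    have "v = (1/t0) *\<^sub>R (x - h0)" using h0 t0 by simp
    then have "y = h + t *\<^sub>R ((1/t0) *\<^sub>R (x - h0))" using h(2) by simp
    also have "\<dots> = (h - (t/t0) *\<^sub>R h0) + (t/t0) *\<^sub>R x"
      by (simp add: scaleR_diff_right scaleR_scaleR)
    finally have "y = (h - (t/t0) *\<^sub>R h0) + (t/t0) *\<^sub>R x" .
    moreover have "h - (t/t0) *\<^sub>R h0 \<in> H" using sH h h0 by (simp add: subspace_diff subspace_scale)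
    ultimately show ?thesis by blast
  qed
  have uniq: "s1 = s2" if "h1 \<in> H" "h2 \<in> H" "h1 + s1 *\<^sub>R x = h2 + s2 *\<^sub>R x" for h1 h2 s1 s2
  proof (rule ccontr)
    assume "s1 \<noteq> s2"
    have eq: "(s1 - s2) *\<^sub>R x = h2 - h1" using that(3) by (simp add: algebra_simps)
    have "x = (1/(s1 - s2)) *\<^sub>R ((s1 - s2) *\<^sub>R x)" using \<open>s1 \<noteq> s2\<close> by simp
    also have "\<dots> = (1/(s1 - s2)) *\<^sub>R (h2 - h1)" by (simp only: eq)
    finally have "x = (1/(s1 - s2)) *\<^sub>R (h2 - h1)" .
    moreover have "(1/(s1 - s2)) *\<^sub>R (h2 - h1) \<in> H" using sH that by (simp add: subspace_diff subspace_scale)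
    ultimately show False using xH by simp
  qed
  define g where "g y = (THE s. \<exists>h\<in>H. y = h + s *\<^sub>R x)" for y
  have gs: "g y = s" if "h \<in> H" "y = h + s *\<^sub>R x" for y h s
    unfolding g_def using that uniq by (intro the_equality) blast+
  have gadd: "g (y1 + y2) = g y1 + g y2" for y1 y2
  proof -
    obtain h1 s1 h2 s2 where "h1 \<in> H" "y1 = h1 + s1 *\<^sub>R x" "h2 \<in> H" "y2 = h2 + s2 *\<^sub>R x"
      using dec by meson
    moreover have "y1 + y2 = (h1 + h2) + (s1 + s2) *\<^sub>R x" using calculation by (simp add: algebra_simps)
    moreover have "h1 + h2 \<in> H" using sH calculation by (simp add: subspace_add)
    ultimately show ?thesis using gs by metis
  qed
  have gscl: "g (c *\<^sub>R y) = c *\<^sub>R g y" for c y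
  proof -
    obtain h s where "h \<in> H" "y = h + s *\<^sub>R x" using dec by meson
    moreover have "c *\<^sub>R y = c *\<^sub>R h + (c * s) *\<^sub>R x" using calculation by (simp add: algebra_simps)
    moreover have "c *\<^sub>R h \<in> H" using sH calculation by (simp add: subspace_scale)
    ultimately show ?thesis using gs by (metis real_scaleR_def)
  qed
  have gb: "norm (g y) \<le> norm y * 1" for y
  proof -
    obtain h s where "h \<in> H" "y = h + s *\<^sub>R x" using dec by meson
    then show ?thesis using gs key by fastforce
  qed
  have bl: "bounded_linear g" by (rule bounded_linear_intro[OF gadd gscl gb])
  define G where "G = Blinfun g"
  have Gap: "blinfun_apply G y = g y" for y using bl by (simp add: G_def bounded_linear_Blinfun_apply)
  have Gx: "blinfun_apply G x = 1" unfolding Gap by (rule gs[of 0]) (auto simp: sH subspace_0)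
  have "norm G \<le> 1" using gb by (intro norm_blinfun_bound) (auto simp: Gap)
  moreover have "1 \<le> norm G" using norm_blinfun[of G x] Gx x by simp
  ultimately have "norm G = 1" by simp
  then have Gf: "G = f" using supp_unique[OF smX x _ Gx f] by simp
  show ?thesis
  proof (intro set_eqI iffI)
    fix y assume "y \<in> H"
    then have "g y = 0" by (intro gs[of y]) auto
    then show "y \<in> {y. blinfun_apply f y = 0}" using Gf Gap by auto
  next
    fix y assume "y \<in> {y. blinfun_apply f y = 0}"
    then have "g y = 0" using Gf Gap by auto
    obtain h s where "h \<in> H" "y = h + s *\<^sub>R x" using dec by meson
    moreover have "s = 0" using gs calculation \<open>g y = 0\<close> by metis
    ultimately show "y \<in> H" by simp
  qed
qed

lemma not_extreme:
  fixes T :: "'a::real_normed_vector \<Rightarrow>\<^sub>L 'b::real_normed_vector"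
  assumes refl: "reflexive_space TYPE('a)" and smX: "smooth_space TYPE('a)"
    and smY: "smooth_space TYPE('b)" and kk: "kadets_klee TYPE('a)"
    and sT: "smooth_operator T" and dimX: "dim_gt_one TYPE('a)"
    and x: "norm x = 1" "norm (blinfun_apply T x) = 1"
    and H: "hyperspace H" and orth: "\<forall>h\<in>H. bj_orth x h"
    and cpp: "CPP x (blinfun_apply T x) r \<mu>"
    and s0: "0 < norm_on H T" and s\<mu>: "norm_on H T < \<mu>"
  shows "\<not> extreme_contraction T"
proof
  assume ext: "extreme_contraction T"
  have cT: "compact_op T" and nT: "norm T = 1" using sT unfolding smooth_operator_def by auto
  obtain f :: "'a \<Rightarrow>\<^sub>L real" where f: "norm f = 1" "blinfun_apply f x = 1"
    using supp_ex[OF smX x(1)] by blast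
  have HK: "H = {y. blinfun_apply f y = 0}" using hyp_unique[OF smX f x(1) H orth] .
  have sH: "subspace H" using H unfolding hyperspace_def by blast
  obtain g :: "'b \<Rightarrow>\<^sub>L real" where g: "norm g = 1" "blinfun_apply g (blinfun_apply T x) = 1"
    using supp_ex[OF smY x(2)] by blast
  have gT: "g o\<^sub>L T = f"
  proof -
    have "norm (g o\<^sub>L T) \<le> 1" using norm_blinfun_compose[of g T] g nT by simp
    moreover have gx: "blinfun_apply (g o\<^sub>L T) x = 1" using g by simp
    moreover have "1 \<le> norm (g o\<^sub>L T)" using norm_blinfun[of "g o\<^sub>L T" x] gx x by simp
    ultimately show ?thesis using supp_unique[OF smX x(1) _ gx f] by simp
  qed
  have gTh: "blinfun_apply g (blinfun_apply T h) = 0" if "h \<in> H" for h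
  proof -
    have "blinfun_apply (g o\<^sub>L T) h = 0" using that HK gT by simp
    then show ?thesis by simp
  qed
  have orthT: "bj_orth (blinfun_apply T x) (blinfun_apply T h)" if "h \<in> H" for h
    unfolding bj_orth_def
  proof
    fix t :: real
    have "blinfun_apply g (blinfun_apply T x + t *\<^sub>R blinfun_apply T h) = 1"
      using g gTh[OF that] by (simp add: blinfun.add_right blinfun.scaleR_right)
    then show "norm (blinfun_apply T x) \<le> norm (blinfun_apply T x + t *\<^sub>R blinfun_apply T h)"
      using fbound[of g "blinfun_apply T x + t *\<^sub>R blinfun_apply T h"] g x by simp
  qed
  define s where "s = norm_on H T"
  have sb: "norm (blinfun_apply T h) \<le> s" if "h \<in> H" "norm h = 1" for h
  proof -
    have "bdd_above {norm (blinfun_apply T h) |h. h \<in> H \<and> norm h = 1}"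
    proof (rule bdd_aboveI)
      fix w assume "w \<in> {norm (blinfun_apply T h) |h. h \<in> H \<and> norm h = 1}"
      then obtain h where "w = norm (blinfun_apply T h)" "norm h = 1" by blast
      then show "w \<le> 1" using norm_blinfun[of T h] nT by simp
    qed
    then show ?thesis unfolding s_def norm_on_def using that by (intro cSup_upper) auto
  qed
  have rpos: "r > 0" and mpos: "\<mu> > 0" using cpp unfolding CPP_def by auto
  have cppI: "norm (a *\<^sub>R blinfun_apply T x + (b * \<mu>) *\<^sub>R w) \<le> 1"
    if "norm z = 1" "bj_orth x z" "norm w = 1" "bj_orth (blinfun_apply T x) w"
       "dist (a *\<^sub>R x + b *\<^sub>R z) x < r" "norm (a *\<^sub>R x + b *\<^sub>R z) = 1" for z w a b
    using cpp that unfolding CPP_def by blast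
  obtain \<eta> where \<eta>: "\<eta> > 0" "\<And>y. norm y = 1 \<Longrightarrow> r \<le> dist y x \<Longrightarrow> r \<le> dist y (-x) \<Longrightarrow> norm (blinfun_apply T y) \<le> 1 - \<eta>"
    using gap[OF refl smX smY kk sT x rpos] by blast
  have spos: "s > 0" and sm: "s < \<mu>" using s0 s\<mu> by (auto simp: s_def)
  define \<delta> where "\<delta> = min (\<eta>/2) (min (\<mu>/s - 1) 1)"
  have "\<mu>/s - 1 > 0" using spos sm by (simp add: field_simps)
  then have \<delta>pos: "\<delta> > 0" using \<eta> by (simp add: \<delta>_def)
  define P where "P = id_blinfun - rk f x"
  have Pap: "blinfun_apply P y = y - blinfun_apply f y *\<^sub>R x" for y by (simp add: P_def rk_apply blinfun.diff_left)
  have PH: "blinfun_apply P y \<in> H" for y using f by (simp add: HK Pap blinfun.diff_right blinfun.scaleR_right)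
  have ydec: "y = blinfun_apply P y + blinfun_apply f y *\<^sub>R x" for y by (simp add: Pap)
  define S where "S l = T + (l - 1) *\<^sub>R (T o\<^sub>L P)" for l
  have Sap2: "blinfun_apply (S l) y = blinfun_apply T y + (l - 1) *\<^sub>R blinfun_apply T (blinfun_apply P y)" for l y
    by (simp add: S_def blinfun.add_left blinfun.scaleR_left)
  have Sap: "blinfun_apply (S l) y = blinfun_apply f y *\<^sub>R blinfun_apply T x + l *\<^sub>R blinfun_apply T (blinfun_apply P y)" for l y
  proof -
    have "blinfun_apply T y = blinfun_apply T (blinfun_apply P y) + blinfun_apply f y *\<^sub>R blinfun_apply T x"
      by (subst ydec[of y]) (simp add: blinfun.add_right blinfun.scaleR_right)
    then show ?thesis by (simp add: Sap2 algebra_simps)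
  qed
  have caseA: "norm (blinfun_apply (S l) y) \<le> 1"
    if l: "1 - \<delta> \<le> l" "l \<le> 1 + \<delta>" and y: "norm y = 1" "dist y x < r" for l y
  proof -
    define a where "a = blinfun_apply f y"
    define hv where "hv = blinfun_apply P y"
    have a1: "\<bar>a\<bar> \<le> 1" using fbound[of f y] f y by (simp add: a_def)
    have Sy: "blinfun_apply (S l) y = a *\<^sub>R blinfun_apply T x + l *\<^sub>R blinfun_apply T hv"
      by (simp add: Sap a_def hv_def)
    have hvH: "hv \<in> H" by (simp add: hv_def PH)
    have yd: "y = a *\<^sub>R x + hv" using ydec[of y] by (simp add: a_def hv_def add.commute)
    show ?thesis
    proof (cases "blinfun_apply T hv = 0")
      case True
      then show ?thesis using Sy a1 x by simp
    next
      case False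
      then have hv0: "hv \<noteq> 0" by auto
      define b where "b = norm hv"
      have bpos: "b > 0" using hv0 by (simp add: b_def)
      define z where "z = (1/b) *\<^sub>R hv"
      have z1: "norm z = 1" using bpos by (simp add: z_def b_def)
      have zH: "z \<in> H" using sH hvH by (simp add: z_def subspace_scale)
      have hvz: "hv = b *\<^sub>R z" using bpos by (simp add: z_def)
      have Tz0: "blinfun_apply T z \<noteq> 0" using False hvz bpos by (simp add: blinfun.scaleR_right)
      define c where "c = norm (blinfun_apply T z)"
      have cpos: "c > 0" using Tz0 by (simp add: c_def)
      have cs: "c \<le> s" using sb[OF zH z1] by (simp add: c_def)
      define w where "w = (1/c) *\<^sub>R blinfun_apply T z"
      have w1: "norm w = 1" using cpos by (simp add: w_def c_def)
      have wT: "w = blinfun_apply T ((1/c) *\<^sub>R z)" by (simp add: w_def blinfun.scaleR_right)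
      have wo: "bj_orth (blinfun_apply T x) w" unfolding wT
        by (rule orthT) (simp add: sH zH subspace_scale)
      have Thv: "blinfun_apply T hv = (b * c) *\<^sub>R w"
        using cpos by (simp add: hvz w_def blinfun.scaleR_right)
      have yab: "y = a *\<^sub>R x + b *\<^sub>R z" using yd hvz by simp
      have C: "norm (a *\<^sub>R blinfun_apply T x + (b * \<mu>) *\<^sub>R w) \<le> 1"
        using cppI[OF z1 orth[rule_format, OF zH] w1 wo] y yab by simp
      define \<theta> where "\<theta> = l * c / \<mu>"
      have l0: "0 \<le> l" using l \<delta>_def by simp
      have "l \<le> \<mu> / s" using l(2) \<delta>_def by simp
      then have "l * c \<le> \<mu> / s * s"
        by (rule mult_mono) (use cs l0 cpos spos mpos in auto)
      then have "l * c \<le> \<mu>" using spos by simp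
      then have th: "0 \<le> \<theta>" "\<theta> \<le> 1" using l0 cpos mpos by (auto simp: \<theta>_def field_simps)
      have "blinfun_apply (S l) y = (1 - \<theta>) *\<^sub>R (a *\<^sub>R blinfun_apply T x) + \<theta> *\<^sub>R (a *\<^sub>R blinfun_apply T x + (b * \<mu>) *\<^sub>R w)"
        using mpos by (simp add: Sy Thv \<theta>_def algebra_simps)
      also have "norm \<dots> \<le> (1 - \<theta>) * norm (a *\<^sub>R blinfun_apply T x) + \<theta> * norm (a *\<^sub>R blinfun_apply T x + (b * \<mu>) *\<^sub>R w)"
      proof -
        have "norm ((1 - \<theta>) *\<^sub>R (a *\<^sub>R blinfun_apply T x) + \<theta> *\<^sub>R (a *\<^sub>R blinfun_apply T x + (b * \<mu>) *\<^sub>R w))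
          \<le> \<bar>1 - \<theta>\<bar> * norm (a *\<^sub>R blinfun_apply T x) + \<bar>\<theta>\<bar> * norm (a *\<^sub>R blinfun_apply T x + (b * \<mu>) *\<^sub>R w)"
          by (metis norm_scaleR norm_triangle_ineq real_norm_def)
        then show ?thesis using th by simp
      qed
      also have "\<dots> \<le> (1 - \<theta>) * 1 + \<theta> * 1"
        using th a1 x C by (intro add_mono mult_left_mono) auto
      finally show ?thesis by simp
    qed
  qed
  have unit: "norm (blinfun_apply (S l) y) \<le> 1"
    if l: "1 - \<delta> \<le> l" "l \<le> 1 + \<delta>" and y: "norm y = 1" for l y
  proof (cases "dist y x < r")
    case True then show ?thesis using caseA[OF l y] by simp
  next
    case F1: False
    show ?thesis
    proof (cases "dist y (-x) < r")
      case True
      then have "dist (-y) x < r" by (simp add: dist_norm algebra_simps norm_minus_commute)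
      then have "norm (blinfun_apply (S l) (-y)) \<le> 1" using caseA[OF l] y by simp
      then show ?thesis by (simp add: blinfun.minus_right)
    next
      case False
      then have Ty: "norm (blinfun_apply T y) \<le> 1 - \<eta>" using \<eta>(2)[OF y] F1 by simp
      have "norm (blinfun_apply P y) \<le> 2"
      proof -
        have "norm (blinfun_apply P y) \<le> norm y + norm (blinfun_apply f y *\<^sub>R x)"
          unfolding Pap by (rule norm_triangle_ineq4)
        also have "\<dots> \<le> 1 + 1" using y x fbound[of f y] f by simp
        finally show ?thesis by simp
      qed
      then have TP: "norm (blinfun_apply T (blinfun_apply P y)) \<le> 2"
        using norm_blinfun[of T "blinfun_apply P y"] nT by simp
      have "blinfun_apply (S l) y = blinfun_apply T y + (l - 1) *\<^sub>R blinfun_apply T (blinfun_apply P y)"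
        by (rule Sap2)
      then have "norm (blinfun_apply (S l) y) \<le> norm (blinfun_apply T y) + \<bar>l - 1\<bar> * norm (blinfun_apply T (blinfun_apply P y))"
        by (metis norm_scaleR norm_triangle_ineq)
      also have "\<dots> \<le> (1 - \<eta>) + \<delta> * 2"
        using Ty TP l by (intro add_mono mult_mono) auto
      also have "\<dots> \<le> 1"
      proof -
        have "\<delta> \<le> \<eta>/2" unfolding \<delta>_def by (rule min.cobounded1)
        then show ?thesis by linarith
      qed
      finally show ?thesis .
    qed
  qed
  have Sn: "norm (S l) \<le> 1" if "1 - \<delta> \<le> l" "l \<le> 1 + \<delta>" for l
  proof (rule norm_blinfun_bound)
    fix y
    show "norm (blinfun_apply (S l) y) \<le> 1 * norm y"
    proof (cases "y = 0")
      case False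
      then have "norm (blinfun_apply (S l) ((1 / norm y) *\<^sub>R y)) \<le> 1" by (intro unit that) simp
      then show ?thesis using False by (simp add: blinfun.scaleR_right field_simps)
    qed simp
  qed simp
  have "\<exists>h\<in>H. blinfun_apply T h \<noteq> 0"
  proof (rule ccontr)
    assume "\<not> ?thesis"
    then have T0: "\<And>h. h \<in> H \<Longrightarrow> blinfun_apply T h = 0" by blast
    show False
    proof (cases "\<exists>h\<in>H. norm h = 1")
      case True
      then have "{norm (blinfun_apply T h) |h. h \<in> H \<and> norm h = 1} = {0}" using T0 by (auto; blast)
      then show False using s0 by (simp add: norm_on_def)
    next
      case False
      have H0: "h = 0" if "h \<in> H" for h
      proof (rule ccontr)
        assume "h \<noteq> 0"
        then have "(1 / norm h) *\<^sub>R h \<in> H" "norm ((1 / norm h) *\<^sub>R h) = 1"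
          using sH that by (auto simp: subspace_scale)
        then show False using False by blast
      qed
      have ysp: "y = blinfun_apply f y *\<^sub>R x" for y using ydec[of y] H0[OF PH[of y]] by simp
      obtain u v :: 'a where uv: "independent {u, v}" "u \<noteq> v" using dimX unfolding dim_gt_one_def by blast
      have "dependent {u, v}"
      proof (cases "blinfun_apply f u = 0")
        case True
        then have "u = 0" using ysp[of u] by simp
        then show ?thesis by (simp add: dependent_zero)
      next
        case False
        have "v = (blinfun_apply f v / blinfun_apply f u) *\<^sub>R u"
          using ysp[of u] ysp[of v] False by (metis (no_types, lifting) divide_eq_0_iff nonzero_eq_divide_eq scaleR_scaleR)
        then have "v \<in> span ({u, v} - {v})" using uv(2)
          by (metis insert_Diff_if insert_iff singleton_iff span_base span_scale empty_Diff insert_Diff1 Diff_insert_absorb)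
        then show ?thesis unfolding dependent_def by blast
      qed
      then show False using uv by simp
    qed
  qed
  then obtain h where hH: "h \<in> H" and Th: "blinfun_apply T h \<noteq> 0" by blast
  have "blinfun_apply (T o\<^sub>L P) h \<noteq> 0" using hH Th HK by (simp add: Pap)
  then have TP0: "T o\<^sub>L P \<noteq> 0" by (metis blinfun.zero_left)
  have a_in: "S (1 - \<delta>) \<in> cball 0 1" "S (1 + \<delta>) \<in> cball 0 1" using Sn \<delta>pos by auto
  have ne: "S (1 - \<delta>) \<noteq> S (1 + \<delta>)"
  proof
    assume "S (1 - \<delta>) = S (1 + \<delta>)"
    then have "(2 * \<delta>) *\<^sub>R (T o\<^sub>L P) = 0" by (simp add: S_def algebra_simps scaleR_2 flip: scaleR_scaleR)
    then show False using TP0 \<delta>pos by simp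
  qed
  have "T = (1 - 1/2) *\<^sub>R S (1 - \<delta>) + (1/2) *\<^sub>R S (1 + \<delta>)"
    by (simp add: S_def algebra_simps flip: scaleR_add_left)
  then have "T \<in> open_segment (S (1 - \<delta>)) (S (1 + \<delta>))"
    using ne unfolding in_segment by (intro conjI exI[of _ "1/2"]) auto
  then show False using ext a_in unfolding extreme_contraction_def extreme_point_of_def by blast
qed

theorem mainTheorem17:
  fixes T :: "'a::banach \<Rightarrow>\<^sub>L 'b::banach"
  assumes "dim_gt_one TYPE('a)" and "dim_gt_one TYPE('b)"
    and "smooth_space TYPE('a)" and "reflexive_space TYPE('a)" and "kadets_klee TYPE('a)"
    and "smooth_space TYPE('b)"
    and "compact_op T" and "norm T = 1" and "smooth_operator T"
  shows "(\<exists>x. norm x = 1 \<and> norm_attainment_set T = {x, - x}) \<and>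
    (\<forall>x \<in> norm_attainment_set T.
       (\<exists>!H. hyperspace H \<and> (\<forall>h\<in>H. bj_orth x h)) \<and>
       (\<forall>H r \<mu>. hyperspace H \<and> (\<forall>h\<in>H. bj_orth x h) \<and> CPP x (blinfun_apply T x) r \<mu> \<and>
          0 < norm_on H T \<and> norm_on H T < \<mu> \<longrightarrow> \<not> extreme_contraction T))"
proof -
  note dimX = assms(1) and smX = assms(3) and refl = assms(4) and kk = assms(5)
    and smY = assms(6) and cT = assms(7) and nT = assms(8) and sT = assms(9)
  obtain x0 where x0: "norm x0 = 1" "norm (blinfun_apply T x0) = 1"
    using attain[OF refl smX smY cT nT] by blast
  have "norm_attainment_set T = {x0, - x0}"
  proof (intro set_eqI iffI)
    fix w assume "w \<in> norm_attainment_set T"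
    then have "norm w = 1" "norm (blinfun_apply T w) = 1" using nT by (auto simp: norm_attainment_set_def)
    then show "w \<in> {x0, - x0}" using MT_pm[OF smX smY sT x0] by auto
  next
    fix w assume "w \<in> {x0, - x0}"
    then show "w \<in> norm_attainment_set T" using x0 nT
      by (auto simp: norm_attainment_set_def blinfun.minus_right)
  qed
  then have P1: "\<exists>x. norm x = 1 \<and> norm_attainment_set T = {x, - x}" using x0 by blast
  have P2: "(\<exists>!H. hyperspace H \<and> (\<forall>h\<in>H. bj_orth x h)) \<and>
       (\<forall>H r \<mu>. hyperspace H \<and> (\<forall>h\<in>H. bj_orth x h) \<and> CPP x (blinfun_apply T x) r \<mu> \<and>
          0 < norm_on H T \<and> norm_on H T < \<mu> \<longrightarrow> \<not> extreme_contraction T)"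
    if "x \<in> norm_attainment_set T" for x
  proof -
    have x: "norm x = 1" "norm (blinfun_apply T x) = 1" using that nT by (auto simp: norm_attainment_set_def)
    obtain f :: "'a \<Rightarrow>\<^sub>L real" where f: "norm f = 1" "blinfun_apply f x = 1"
      using supp_ex[OF smX x(1)] by blast
    have "\<exists>!H. hyperspace H \<and> (\<forall>h\<in>H. bj_orth x h)"
    proof (rule ex1I[of _ "{y. blinfun_apply f y = 0}"])
      show "hyperspace {y. blinfun_apply f y = 0} \<and> (\<forall>h\<in>{y. blinfun_apply f y = 0}. bj_orth x h)"
        using hyp_exists[OF f x(1)] .
      show "H = {y. blinfun_apply f y = 0}" if "hyperspace H \<and> (\<forall>h\<in>H. bj_orth x h)" for H
        using hyp_unique[OF smX f x(1)] that by blast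
    qed
    moreover have "\<not> extreme_contraction T"
      if "hyperspace H \<and> (\<forall>h\<in>H. bj_orth x h) \<and> CPP x (blinfun_apply T x) r \<mu> \<and>
          0 < norm_on H T \<and> norm_on H T < \<mu>" for H r \<mu>
      using not_extreme[OF refl smX smY kk sT dimX x, of H r \<mu>] that by blast
    ultimately show ?thesis by blast
  qed
  show ?thesis using P1 P2 by blast
qed

end
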